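(* Let $(X,d_X)$ be a compact geodesic metric space, $r\in X$, $d=d_X(r,\cdot)$, and let $(G,d_G)$ be either the metric Reeb graph of $d$ or the metric $\alpha$-Reeb graph of $d$, assumed to be a finite graph, with quotient map $\pi:X\to G$. Then $\pi$ is $1$-Lipschitz: for all $x,y\in X$, $d_G(\pi(x),\pi(y))\le d_X(x,y)$.
   Context: Reeb graph: for $x,y\in X$ set $x\sim y$ iff $d(x)=d(y)$ and $x,y$ lie in the same path-connected component of $d^{-1}(d(x))$; $G=X/\sim$, with quotient map $\pi:X\to G$. $\alpha$-Reeb graph: given $\alpha>0$ and a covering $\mathcal I=\{I_i\}$ of the range of $d$ by open intervals of length at most $\alpha$, let $\sim_\alpha$ be the transitive closure of the relation "$d(x)=d(y)$ and $x,y$ lie in the same path-connected component of $d^{-1}(I_i)$ for some $i$"; $G=X/\sim_\alpha$. In both cases $d$ induces $d_*:G\to\mathbb R_+$ with $d=d_*\circ\pi$. Metric structure (assuming $G$ is a finite topological graph): the vertex set $V$ consists of the points of degree $\neq 2$, the local maxima of $d_*$, and $\pi(r)$; the edges are the connected components of $G\setminus V$. Each edge is given length equal to the absolute difference of $d_*$ at its endpoints, the distance between two points $p,p'$ of the same edge being $|d_*(p)-d_*(p')|$; $d_G$ is the resulting metric-graph metric. *)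

theory Defs
  imports "HOL-Analysis.Analysis"
begin

text \<open>Compact geodesic metric space: a subset X of a metric space (with the induced metric),
  compact, in which any two points are joined by a geodesic, i.e. an isometric embedding
  of [0, dist x y] (parametrised here on [0,1] with constant speed).\<close>
definition geodesic_space :: "'a::metric_space set \<Rightarrow> bool" where
  "geodesic_space X \<longleftrightarrow>
     (\<forall>x\<in>X. \<forall>y\<in>X. \<exists>\<gamma>::real \<Rightarrow> 'a. \<gamma> 0 = x \<and> \<gamma> 1 = y \<and> \<gamma> ` {0..1} \<subseteq> X \<and>
        (\<forall>s\<in>{0..1}. \<forall>t\<in>{0..1}. dist (\<gamma> s) (\<gamma> t) = \<bar>s - t\<bar> * dist x y))"

definition reeb_rel :: "'a::metric_space set \<Rightarrow> ('a \<Rightarrow> real) \<Rightarrow> ('a \<times> 'a) set" where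
  "reeb_rel X d = {(x, y). x \<in> X \<and> y \<in> X \<and> d x = d y \<and>
                          path_component {z \<in> X. d z = d x} x y}"

definition alpha_cover :: "real \<Rightarrow> 'a set \<Rightarrow> ('a \<Rightarrow> real) \<Rightarrow> real set set \<Rightarrow> bool" where
  "alpha_cover \<alpha> X d \<I> \<longleftrightarrow>
     (\<forall>I\<in>\<I>. \<exists>a b. a < b \<and> I = {a<..<b} \<and> b - a \<le> \<alpha>) \<and> d ` X \<subseteq> \<Union>\<I>"

definition alpha_reeb_rel :: "'a::metric_space set \<Rightarrow> ('a \<Rightarrow> real) \<Rightarrow> real set set \<Rightarrow> ('a \<times> 'a) set" where
  "alpha_reeb_rel X d \<I> = ({(x, y). x \<in> X \<and> y \<in> X \<and> d x = d y \<and>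
        (\<exists>I\<in>\<I>. path_component {z \<in> X. d z \<in> I} x y)})\<^sup>+"

definition qmap :: "('a \<times> 'a) set \<Rightarrow> 'a \<Rightarrow> 'a set" where
  "qmap R x = R `` {x}"

definition quotient_top :: "'a::topological_space set \<Rightarrow> ('a \<times> 'a) set \<Rightarrow> 'a set topology" where
  "quotient_top X R = topology (\<lambda>U. U \<subseteq> X // R \<and> openin (top_of_set X) {x \<in> X. qmap R x \<in> U})"

definition dstar :: "'a set \<Rightarrow> ('a \<times> 'a) set \<Rightarrow> ('a \<Rightarrow> real) \<Rightarrow> 'a set \<Rightarrow> real" where
  "dstar X R d p = d (SOME x. x \<in> X \<and> qmap R x = p)"

definition finite_topological_graph :: "'b topology \<Rightarrow> bool" where
  "finite_topological_graph T \<longleftrightarrow> compact_space T \<and> Hausdorff_space T \<and>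
     (\<exists>W E. finite W \<and> W \<subseteq> topspace T \<and> finite E \<and> pairwise disjnt E \<and>
        \<Union>E = topspace T - W \<and>
        (\<forall>e\<in>E. openin T e \<and> subtopology T e homeomorphic_space top_of_set {0<..<(1::real)}))"

definition has_degree :: "'b topology \<Rightarrow> 'b \<Rightarrow> nat \<Rightarrow> bool" where
  "has_degree T p n \<longleftrightarrow>
     (\<exists>U0. openin T U0 \<and> p \<in> U0 \<and>
        (\<forall>U. openin T U \<and> p \<in> U \<and> U \<subseteq> U0 \<and> connectedin T U \<longrightarrow>
              card (connected_components_of (subtopology T (U - {p}))) = n \<and>
              finite (connected_components_of (subtopology T (U - {p})))))"

definition local_max_pt :: "'b topology \<Rightarrow> ('b \<Rightarrow> real) \<Rightarrow> 'b \<Rightarrow> bool" where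
  "local_max_pt T f p \<longleftrightarrow> p \<in> topspace T \<and>
     (\<exists>U. openin T U \<and> p \<in> U \<and> (\<forall>q\<in>U. f q \<le> f p))"

definition reeb_vertices :: "'a::metric_space set \<Rightarrow> ('a \<times> 'a) set \<Rightarrow> ('a \<Rightarrow> real) \<Rightarrow> 'a \<Rightarrow> 'a set set" where
  "reeb_vertices X R d r =
     {p \<in> X // R. \<not> has_degree (quotient_top X R) p 2}
     \<union> {p \<in> X // R. local_max_pt (quotient_top X R) (dstar X R d) p}
     \<union> {qmap R r}"

definition reeb_edges :: "'a::metric_space set \<Rightarrow> ('a \<times> 'a) set \<Rightarrow> ('a \<Rightarrow> real) \<Rightarrow> 'a \<Rightarrow> 'a set set set" where
  "reeb_edges X R d r =
     connected_components_of (subtopology (quotient_top X R) (X // R - reeb_vertices X R d r))"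

text \<open>Metric-graph metric: each edge carries the distance |d_*(p) - d_*(p')| (extended to
  its endpoints, i.e. its closure), and d_G is the induced path metric, i.e. the infimum
  over finite chains from p to q whose consecutive points lie on a common closed edge of
  the sum of these edge distances.\<close>
definition reeb_graph_dist :: "'a::metric_space set \<Rightarrow> ('a \<times> 'a) set \<Rightarrow> ('a \<Rightarrow> real) \<Rightarrow> 'a \<Rightarrow> 'a set \<Rightarrow> 'a set \<Rightarrow> real" where
  "reeb_graph_dist X R d r p q =
     Inf {(\<Sum>i<n. \<bar>dstar X R d (c i) - dstar X R d (c (Suc i))\<bar>) | c n.
            c 0 = p \<and> c n = q \<and>
            (\<forall>i<n. \<exists>e\<in>reeb_edges X R d r.
                c i \<in> (quotient_top X R) closure_of e \<and>
                c (Suc i) \<in> (quotient_top X R) closure_of e)}"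

end

theory Submission
  imports Defs
begin


lemma quotient_top_open:
  "openin (quotient_top X R) U \<longleftrightarrow> U \<subseteq> X // R \<and> openin (top_of_set X) {x \<in> X. qmap R x \<in> U}"
proof -
  have int: "openin (top_of_set X) {x \<in> X. qmap R x \<in> S \<inter> T}"
    if "openin (top_of_set X) {x \<in> X. qmap R x \<in> S}" "openin (top_of_set X) {x \<in> X. qmap R x \<in> T}" for S T
  proof -
    have "{x \<in> X. qmap R x \<in> S \<inter> T} = {x \<in> X. qmap R x \<in> S} \<inter> {x \<in> X. qmap R x \<in> T}" by auto
    then show ?thesis using that by auto
  qed
  have un: "openin (top_of_set X) {x \<in> X. qmap R x \<in> \<Union>K}"
    if "\<forall>k\<in>K. openin (top_of_set X) {x \<in> X. qmap R x \<in> k}" for K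
  proof -
    have "{x \<in> X. qmap R x \<in> \<Union>K} = (\<Union>k\<in>K. {x \<in> X. qmap R x \<in> k})" by auto
    then show ?thesis using that by auto
  qed
  have "istopology (\<lambda>U. U \<subseteq> X // R \<and> openin (top_of_set X) {x \<in> X. qmap R x \<in> U})"
    unfolding istopology_def using int un by blast
  then show ?thesis unfolding quotient_top_def by simp
qed

lemma quotient_top_topspace: "topspace (quotient_top X R) = X // R"
proof -
  have e: "{x \<in> X. qmap R x \<in> X // R} = X"
    by (auto simp: qmap_def quotient_def)
  have "openin (quotient_top X R) (X // R)"
    unfolding quotient_top_open e by auto
  then have "X // R \<subseteq> topspace (quotient_top X R)" by (simp add: openin_subset)
  moreover have "topspace (quotient_top X R) \<subseteq> X // R"
    using quotient_top_open[of X R "topspace (quotient_top X R)"] by auto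
  ultimately show ?thesis by auto
qed

lemma qmap_in: "x \<in> X \<Longrightarrow> qmap R x \<in> X // R"
  by (auto simp: qmap_def quotient_def)

lemma continuous_qmap: "continuous_map (top_of_set X) (quotient_top X R) (qmap R)"
  unfolding continuous_map quotient_top_topspace
proof (intro conjI allI impI)
  show "qmap R ` topspace (top_of_set X) \<subseteq> X // R" using qmap_in by auto
  fix U assume "openin (quotient_top X R) U"
  then have "openin (top_of_set X) {x \<in> X. qmap R x \<in> U}" by (simp add: quotient_top_open)
  moreover have "{x \<in> topspace (top_of_set X). qmap R x \<in> U} = {x \<in> X. qmap R x \<in> U}" by simp
  ultimately show "openin (top_of_set X) {x \<in> topspace (top_of_set X). qmap R x \<in> U}" by simp
qed


locale rg =
  fixes X :: "'a::metric_space set" and R :: "('a \<times> 'a) set" and d :: "'a \<Rightarrow> real" and r :: 'a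
  assumes refl: "\<And>x. x \<in> X \<Longrightarrow> (x, x) \<in> R"
    and Rd: "\<And>a b. (a, b) \<in> R \<Longrightarrow> d a = d b"
    and geo: "geodesic_space X" and rX: "r \<in> X" and dd: "d = (\<lambda>x. dist r x)"
    and fin: "finite_topological_graph (quotient_top X R)"
begin

abbreviation "G \<equiv> quotient_top X R"
abbreviation "ds \<equiv> dstar X R d"

lemma ds_qmap: assumes "x \<in> X" shows "ds (qmap R x) = d x"
proof -
  have ex: "\<exists>z. z \<in> X \<and> qmap R z = qmap R x" using assms by auto
  define z where "z = (SOME z. z \<in> X \<and> qmap R z = qmap R x)"
  have z: "z \<in> X" "qmap R z = qmap R x" using someI_ex[OF ex] unfolding z_def by auto
  have "z \<in> qmap R z" using refl[OF z(1)] by (simp add: qmap_def)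
  then have "z \<in> qmap R x" using z(2) by simp
  then have xz: "(x, z) \<in> R" by (simp add: qmap_def)
  show ?thesis unfolding dstar_def z_def[symmetric] using Rd[OF xz] by simp
qed

lemma d_cont: "continuous_on UNIV d"
  unfolding dd by (intro continuous_intros)

lemma ds_cont: "continuous_map G euclideanreal ds"
  unfolding continuous_map quotient_top_topspace
proof (intro conjI allI impI)
  show "ds ` (X // R) \<subseteq> topspace euclideanreal" by simp
  fix Op :: "real set" assume "openin euclideanreal Op"
  then have oO: "open Op" by simp
  have e: "{x \<in> X. qmap R x \<in> {p \<in> X // R. ds p \<in> Op}} = X \<inter> d -` Op"
    using ds_qmap qmap_in by auto
  have "openin (top_of_set X) (X \<inter> d -` Op)"
    using continuous_openin_preimage_gen[OF continuous_on_subset[OF d_cont] oO, of X] by simp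
  then show "openin G {p \<in> X // R. ds p \<in> Op}"
    unfolding quotient_top_open e by auto
qed

lemma no_local_min:
  assumes U: "openin G U" and q: "q \<in> U" and mn: "\<And>u. u \<in> U \<Longrightarrow> ds q \<le> ds u"
  shows "q = qmap R r"
proof (rule ccontr)
  assume neq: "q \<noteq> qmap R r"
  have "q \<in> X // R" using U q quotient_top_open by blast
  then obtain z where z: "z \<in> X" "q = qmap R z" by (auto simp: quotient_def qmap_def)
  have zr: "z \<noteq> r" using neq z by auto
  obtain \<gamma> :: "real \<Rightarrow> 'a" where g: "\<gamma> 0 = z" "\<gamma> 1 = r" "\<gamma> ` {0..1} \<subseteq> X"
    "\<And>s t. s \<in> {0..1} \<Longrightarrow> t \<in> {0..1} \<Longrightarrow> dist (\<gamma> s) (\<gamma> t) = \<bar>s - t\<bar> * dist z r"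
    using geo z(1) rX unfolding geodesic_space_def by metis
  have op: "openin (top_of_set X) {x \<in> X. qmap R x \<in> U}" using U quotient_top_open by blast
  have zin: "z \<in> {x \<in> X. qmap R x \<in> U}" using z q by auto
  obtain e where e: "e > 0" "\<And>x'. x' \<in> X \<Longrightarrow> dist x' z < e \<Longrightarrow> x' \<in> {x \<in> X. qmap R x \<in> U}"
    using op zin unfolding openin_euclidean_subtopology_iff by blast
  have D: "dist z r > 0" using zr by simp
  define t where "t = min (1/2) (e / (2 * dist z r))"
  have t: "0 < t" "t \<le> 1/2" using e D by (auto simp: t_def)
  have t01: "t \<in> {0..1}" using t by auto
  have "dist (\<gamma> t) z = t * dist z r" using g(4)[OF t01, of 0] g(1) t by auto
  also have "\<dots> \<le> e / 2" using D t unfolding t_def by (auto simp: field_simps min_def)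
  finally have "dist (\<gamma> t) z < e" using e by linarith
  moreover have gtX: "\<gamma> t \<in> X" using g(3) t01 by auto
  ultimately have "qmap R (\<gamma> t) \<in> U" using e by auto
  then have "ds q \<le> ds (qmap R (\<gamma> t))" by (rule mn)
  also have "\<dots> = d (\<gamma> t)" using ds_qmap gtX by auto
  also have "\<dots> = dist (\<gamma> t) (\<gamma> 1)" using g(2) by (simp add: dd dist_commute)
  also have "\<dots> = (1 - t) * dist z r" using g(4)[OF t01, of 1] t by auto
  also have "\<dots> < dist z r" using t D by (simp add: algebra_simps)
  also have "dist z r = ds q" using ds_qmap z by (simp add: dd dist_commute)
  finally show False by simp
qed

end


definition "lmaxI (h::real\<Rightarrow>real) a \<longleftrightarrow> a \<in> {0<..<1} \<and> (\<exists>\<epsilon>>0. \<forall>x\<in>{0<..<1}. \<bar>x - a\<bar> < \<epsilon> \<longrightarrow> h x \<le> h a)"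
definition "lminI (h::real\<Rightarrow>real) a \<longleftrightarrow> a \<in> {0<..<1} \<and> (\<exists>\<epsilon>>0. \<forall>x\<in>{0<..<1}. \<bar>x - a\<bar> < \<epsilon> \<longrightarrow> h a \<le> h x)"

lemma between_min:
  assumes cont: "continuous_on {0<..<1} h" and a: "lmaxI h a" and b: "lmaxI h b" and ab: "a < b"
  shows "\<exists>c. a < c \<and> c < b \<and> lminI h c"
proof -
  have sub: "{a..b} \<subseteq> {0<..<1}" using a b by (auto simp: lmaxI_def)
  have a01: "0 < a" "b < 1" using a b by (auto simp: lmaxI_def)
  obtain m where m: "m \<in> {a..b}" "\<And>y. y \<in> {a..b} \<Longrightarrow> h m \<le> h y"
    using continuous_attains_inf[of "{a..b}" h] continuous_on_subset[OF cont sub] ab by auto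
  obtain ea where ea: "ea > 0" "\<And>x. x \<in> {0<..<1} \<Longrightarrow> \<bar>x - a\<bar> < ea \<Longrightarrow> h x \<le> h a"
    using a by (auto simp: lmaxI_def)
  obtain eb where eb: "eb > 0" "\<And>x. x \<in> {0<..<1} \<Longrightarrow> \<bar>x - b\<bar> < eb \<Longrightarrow> h x \<le> h b"
    using b by (auto simp: lmaxI_def)
  consider "a < m \<and> m < b" | "m = a" | "m = b" using m(1) by (cases "m = a"; cases "m = b") auto
  then show ?thesis
  proof cases
    case 1
    have "lminI h m" unfolding lminI_def
    proof (intro conjI exI[of _ "min (m - a) (b - m)"] ballI impI)
      show "m \<in> {0<..<1}" using sub m(1) by blast
      show "0 < min (m - a) (b - m)" using 1 by auto
      fix x assume "\<bar>x - m\<bar> < min (m - a) (b - m)"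
      then have "x \<in> {a..b}" by auto
      then show "h m \<le> h x" by (rule m(2))
    qed
    then show ?thesis using 1 by auto
  next
    case 2
    define \<delta> where "\<delta> = min ea (b - a) / 2"
    have \<delta>: "\<delta> > 0" "\<delta> \<le> ea / 2" "\<delta> \<le> (b - a) / 2" using ea ab by (auto simp: \<delta>_def)
    have key: "h x = h a" if "a \<le> x" "x < a + 2 * \<delta>" for x
    proof -
      have "x \<in> {a..b}" using that \<delta> by auto
      then have "h a \<le> h x" using m(2) 2 by auto
      moreover have "x \<in> {0<..<1}" using sub \<open>x \<in> {a..b}\<close> by blast
      moreover have "h x \<le> h a" using ea(2)[OF \<open>x \<in> {0<..<1}\<close>] that \<delta> by auto
      ultimately show ?thesis by linarith
    qed
    have "lminI h (a + \<delta>)" unfolding lminI_def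
    proof (intro conjI exI[of _ \<delta>] ballI impI)
      show "a + \<delta> \<in> {0<..<1}" using a01 \<delta> ab by auto
      show "0 < \<delta>" by fact
      fix x assume "\<bar>x - (a + \<delta>)\<bar> < \<delta>"
      then show "h (a + \<delta>) \<le> h x" using key[of x] key[of "a + \<delta>"] \<delta> by auto
    qed
    then show ?thesis using \<delta> ab by (intro exI[of _ "a + \<delta>"]) auto
  next
    case 3
    define \<delta> where "\<delta> = min eb (b - a) / 2"
    have \<delta>: "\<delta> > 0" "\<delta> \<le> eb / 2" "\<delta> \<le> (b - a) / 2" using eb ab by (auto simp: \<delta>_def)
    have key: "h x = h b" if "x \<le> b" "b - 2 * \<delta> < x" for x
    proof -
      have "x \<in> {a..b}" using that \<delta> by auto
      then have "h b \<le> h x" using m(2) 3 by auto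
      moreover have "x \<in> {0<..<1}" using sub \<open>x \<in> {a..b}\<close> by blast
      moreover have "h x \<le> h b" using eb(2)[OF \<open>x \<in> {0<..<1}\<close>] that \<delta> by auto
      ultimately show ?thesis by linarith
    qed
    have "lminI h (b - \<delta>)" unfolding lminI_def
    proof (intro conjI exI[of _ \<delta>] ballI impI)
      show "b - \<delta> \<in> {0<..<1}" using a01 \<delta> ab by auto
      show "0 < \<delta>" by fact
      fix x assume "\<bar>x - (b - \<delta>)\<bar> < \<delta>"
      then show "h (b - \<delta>) \<le> h x" using key[of x] key[of "b - \<delta>"] \<delta> by auto
    qed
    then show ?thesis using \<delta> ab by (intro exI[of _ "b - \<delta>"]) auto
  qed
qed

lemma subsingleton_finite: assumes that: "\<And>a b. a \<in> S \<Longrightarrow> b \<in> S \<Longrightarrow> a = b" shows "finite S"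
proof (cases "S = {}")
  case False
  then obtain a where "a \<in> S" by auto
  then have "S = {a}" using that by blast
  then show ?thesis by simp
qed simp

lemma finite_lmax:
  assumes cont: "continuous_on {0<..<1} h"
    and mn: "\<And>c c'. lminI h c \<Longrightarrow> lminI h c' \<Longrightarrow> c = c'"
  shows "finite {a. lmaxI h a}"
proof (cases "\<exists>c. lminI h c")
  case False
  have "finite {a. lmaxI h a}"
  proof (rule subsingleton_finite)
    fix a b assume "a \<in> {a. lmaxI h a}" "b \<in> {a. lmaxI h a}"
    then have "lmaxI h a" "lmaxI h b" by auto
    then show "a = b" using between_min[OF cont] False
      by (meson linorder_neqE_linordered_idom)
  qed
  then show ?thesis .
next
  case True
  then obtain c0 where c0: "lminI h c0" by auto
  have strad: "a < c0 \<and> c0 < b" if "lmaxI h a" "lmaxI h b" "a < b" for a b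
    using between_min[OF cont that] mn[OF c0] by blast
  have f1: "finite {a. lmaxI h a \<and> a \<le> c0}"
  proof (rule subsingleton_finite)
    fix a b assume "a \<in> {a. lmaxI h a \<and> a \<le> c0}" "b \<in> {a. lmaxI h a \<and> a \<le> c0}"
    then have "lmaxI h a" "lmaxI h b" "a \<le> c0" "b \<le> c0" by auto
    then show "a = b" using strad[of a b] strad[of b a] by (cases a b rule: linorder_cases) auto
  qed
  have f2: "finite {a. lmaxI h a \<and> c0 \<le> a}"
  proof (rule subsingleton_finite)
    fix a b assume "a \<in> {a. lmaxI h a \<and> c0 \<le> a}" "b \<in> {a. lmaxI h a \<and> c0 \<le> a}"
    then have "lmaxI h a" "lmaxI h b" "c0 \<le> a" "c0 \<le> b" by auto
    then show "a = b" using strad[of a b] strad[of b a] by (cases a b rule: linorder_cases) auto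
  qed
  have "{a. lmaxI h a} \<subseteq> {a. lmaxI h a \<and> a \<le> c0} \<union> {a. lmaxI h a \<and> c0 \<le> a}" by auto
  then show ?thesis using f1 f2 finite_subset by blast
qed


lemma two_components:
  assumes cA: "connectedin Y A" and cB: "connectedin Y B" and oA: "openin Y A" and oB: "openin Y B"
    and dj: "A \<inter> B = {}" and nA: "A \<noteq> {}" and nB: "B \<noteq> {}" and un: "A \<union> B = topspace Y"
  shows "connected_components_of Y = {A, B}"
proof -
  have clA: "closedin Y A"
  proof -
    have "A = topspace Y - B" using dj un by auto
    then show ?thesis using oB by auto
  qed
  have clB: "closedin Y B"
  proof -
    have "B = topspace Y - A" using dj un by auto
    then show ?thesis using oA by auto
  qed
  have compA: "connected_component_of_set Y x = A" if "x \<in> A" for x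
  proof (rule connected_component_of_unique[OF that cA])
    fix C' assume "x \<in> C' \<and> connectedin Y C'"
    then show "C' \<subseteq> A" using connectedin_clopen_cases[OF _ clA oA, of C'] that
      by (auto simp: disjnt_def)
  qed
  have compB: "connected_component_of_set Y x = B" if "x \<in> B" for x
  proof (rule connected_component_of_unique[OF that cB])
    fix C' assume "x \<in> C' \<and> connectedin Y C'"
    then show "C' \<subseteq> B" using connectedin_clopen_cases[OF _ clB oB, of C'] that
      by (auto simp: disjnt_def)
  qed
  show ?thesis unfolding connected_components_of_def
  proof
    show "connected_component_of_set Y ` topspace Y \<subseteq> {A, B}"
      using compA compB un by auto
    show "{A, B} \<subseteq> connected_component_of_set Y ` topspace Y"
    proof -
      obtain x where x: "x \<in> A" using nA by auto
      obtain y where y: "y \<in> B" using nB by auto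
      have "A = connected_component_of_set Y x" using compA[OF x] by simp
      moreover have "B = connected_component_of_set Y y" using compB[OF y] by simp
      moreover have "x \<in> topspace Y" "y \<in> topspace Y" using x y un by auto
      ultimately show ?thesis by auto
    qed
  qed
qed

lemma deg2:
  assumes e: "openin T e" and hom: "homeomorphic_map (subtopology T e) (top_of_set {0<..<1::real}) f"
    and p: "p \<in> e"
  shows "has_degree T p 2"
  unfolding has_degree_def
proof (rule exI[of _ e], rule conjI[OF e], rule conjI[OF p], intro allI impI)
  fix U assume U: "openin T U \<and> p \<in> U \<and> U \<subseteq> e \<and> connectedin T U"
  obtain f' where hm: "homeomorphic_maps (subtopology T e) (top_of_set {0<..<1::real}) f f'"
    using hom by (auto simp: homeomorphic_map_maps)
  have eT: "e \<subseteq> topspace T" using e by (simp add: openin_subset)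
  have tse: "topspace (subtopology T e) = e" using eT by auto
  have cf: "continuous_map (subtopology T e) (top_of_set {0<..<1}) f"
   and cf': "continuous_map (top_of_set {0<..<1}) (subtopology T e) f'"
   and ff': "\<And>x. x \<in> e \<Longrightarrow> f' (f x) = x"
   and f'f: "\<And>y. y \<in> {0<..<1} \<Longrightarrow> f (f' y) = y"
    using hm tse unfolding homeomorphic_maps_def by auto
  have fe: "f ` e \<subseteq> {0<..<1}" using cf tse by (auto simp: continuous_map_def)
  have f'e: "f' ` {0<..<1} \<subseteq> e" using cf' tse by (auto simp: continuous_map_def)
  define S where "S = f ` U"
  define a where "a = f p"
  have US: "U \<subseteq> e" using U by auto
  have oUe: "openin (subtopology T e) U"
    using U by (auto simp: openin_subtopology intro!: exI[of _ U])
  have "openin (top_of_set {0<..<1}) S"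
  proof -
    have "U \<subseteq> topspace (subtopology T e)" using tse US by simp
    then have "openin (top_of_set {0<..<1}) (f ` U) \<longleftrightarrow> openin (subtopology T e) U"
      by (rule homeomorphic_map_openness[OF hom])
    then show ?thesis unfolding S_def using oUe by simp
  qed
  then have oS: "open S" by (rule openin_open_trans) simp
  have "connectedin (top_of_set {0<..<1}) S"
    unfolding S_def
    by (rule connectedin_continuous_map_image[OF cf]) (use U in \<open>auto simp: connectedin_subtopology\<close>)
  then have cS: "connected S" by (simp add: connectedin_subtopology)
  have S01: "S \<subseteq> {0<..<1}" using fe US S_def by auto
  have aS: "a \<in> S" using U a_def S_def by auto
  obtain \<epsilon> where \<epsilon>: "\<epsilon> > 0" "ball a \<epsilon> \<subseteq> S" using oS aS open_contains_ball by blast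
  define A where "A = S \<inter> {..<a}"
  define B where "B = S \<inter> {a<..}"
  have iS: "is_interval S" using cS is_interval_connected_1 by blast
  have cA: "connected A" unfolding A_def
    by (rule convex_connected, rule is_interval_convex, rule is_interval_Int[OF iS]) (simp add: is_interval_ci)
  have cB: "connected B" unfolding B_def
    by (rule convex_connected, rule is_interval_convex, rule is_interval_Int[OF iS]) (simp add: is_interval_ic)
  have oA: "open A" unfolding A_def using oS by (simp add: open_Int)
  have oB: "open B" unfolding B_def using oS by (simp add: open_Int)
  have nA: "a - \<epsilon>/2 \<in> A" using \<epsilon> unfolding A_def by (auto simp: dist_real_def)
  have nB: "a + \<epsilon>/2 \<in> B" using \<epsilon> unfolding B_def by (auto simp: dist_real_def)
  define A' where "A' = f' ` A"
  define B' where "B' = f' ` B"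
  have A01: "A \<subseteq> {0<..<1}" "B \<subseteq> {0<..<1}" using S01 A_def B_def by auto
  have img: "connectedin T (f' ` Z)" "openin T (f' ` Z)" if "Z \<subseteq> {0<..<1}" "connected Z" "open Z" for Z
  proof -
    have "connectedin (subtopology T e) (f' ` Z)"
      by (rule connectedin_continuous_map_image[OF cf']) (use that in \<open>auto simp: connectedin_subtopology\<close>)
    then show "connectedin T (f' ` Z)" by (simp add: connectedin_subtopology)
    have hom': "homeomorphic_map (top_of_set {0<..<1::real}) (subtopology T e) f'"
      using hm unfolding homeomorphic_maps_map by blast
    have Zs: "Z \<subseteq> topspace (top_of_set {0<..<1::real})" using that by simp
    have oZ: "openin (top_of_set {0<..<1::real}) Z"
      using that by (auto simp: openin_open intro!: exI[of _ Z])
    have "openin (subtopology T e) (f' ` Z) \<longleftrightarrow> openin (top_of_set {0<..<1::real}) Z"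
      by (rule homeomorphic_map_openness[OF hom' Zs])
    then have "openin (subtopology T e) (f' ` Z)" using oZ by simp
    then show "openin T (f' ` Z)" using openin_trans_full e by blast
  qed
  have UpAB: "U - {p} = A' \<union> B'"
  proof
    show "U - {p} \<subseteq> A' \<union> B'"
    proof
      fix u assume u: "u \<in> U - {p}"
      have "f u \<noteq> a"
      proof
        assume "f u = a"
        then have "f' (f u) = f' (f p)" using a_def by simp
        then have "u = p" using ff' u US p by auto
        then show False using u by auto
      qed
      moreover have "f u \<in> S" using u S_def by auto
      ultimately have "f u \<in> A \<or> f u \<in> B" unfolding A_def B_def by auto
      moreover have "u = f' (f u)" using ff' u US by auto
      ultimately show "u \<in> A' \<union> B'" unfolding A'_def B'_def by auto
    qed
    show "A' \<union> B' \<subseteq> U - {p}"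
    proof
      fix u assume "u \<in> A' \<union> B'"
      then obtain z where z: "z \<in> A \<union> B" "u = f' z" unfolding A'_def B'_def by auto
      then have zS: "z \<in> S" "z \<noteq> a" unfolding A_def B_def by auto
      then obtain w where w: "w \<in> U" "z = f w" using S_def by auto
      have "u = w" using z w ff' US by auto
      moreover have "w \<noteq> p" using zS w a_def by auto
      ultimately show "u \<in> U - {p}" using w by auto
    qed
  qed
  have dj: "A' \<inter> B' = {}"
  proof (rule ccontr)
    assume "A' \<inter> B' \<noteq> {}"
    then obtain z1 z2 where z: "z1 \<in> A" "z2 \<in> B" "f' z1 = f' z2" unfolding A'_def B'_def by auto
    have z1i: "z1 \<in> {0<..<1}" using A01(1) z(1) by blast
    have z2i: "z2 \<in> {0<..<1}" using A01(2) z(2) by blast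
    have "z1 = f (f' z1)" using f'f[OF z1i] by simp
    also have "\<dots> = z2" using f'f[OF z2i] z(3) by simp
    finally show False using z unfolding A_def B_def by auto
  qed
  have "U \<subseteq> topspace T" using U openin_subset by auto
  then have tsU: "topspace (subtopology T (U - {p})) = U - {p}" by auto
  have sub: "A' \<subseteq> U - {p}" "B' \<subseteq> U - {p}" using UpAB by auto
  have "connected_components_of (subtopology T (U - {p})) = {A', B'}"
  proof (rule two_components)
    show "connectedin (subtopology T (U - {p})) A'" "connectedin (subtopology T (U - {p})) B'"
      using img[of A] img[of B] A01 cA cB oA oB sub unfolding A'_def B'_def by (auto simp: connectedin_subtopology)
    show "openin (subtopology T (U - {p})) A'" "openin (subtopology T (U - {p})) B'"
    proof -
      have "openin T A'" "openin T B'" using img[of A] img[of B] A01 cA cB oA oB unfolding A'_def B'_def by auto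
      then show "openin (subtopology T (U - {p})) A'" "openin (subtopology T (U - {p})) B'"
        using sub unfolding openin_subtopology by blast+
    qed
    show "A' \<inter> B' = {}" by fact
    show "A' \<noteq> {}" "B' \<noteq> {}" using nA nB A'_def B'_def by auto
    show "A' \<union> B' = topspace (subtopology T (U - {p}))" using tsU UpAB by auto
  qed
  moreover have "A' \<noteq> B'" using dj nA nB A'_def B'_def by auto
  ultimately show "card (connected_components_of (subtopology T (U - {p}))) = 2 \<and>
          finite (connected_components_of (subtopology T (U - {p})))" by auto
qed


context rg begin

lemma edge_lmax_finite:
  assumes e: "openin G e" and hm: "homeomorphic_maps (subtopology G e) (top_of_set {0<..<1::real}) f f'"
  shows "finite {p \<in> e. local_max_pt G ds p}"
proof -
  have eT: "e \<subseteq> topspace G" using e by (simp add: openin_subset)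
  have tse: "topspace (subtopology G e) = e" using eT by auto
  have cf: "continuous_map (subtopology G e) (top_of_set {0<..<1}) f"
   and cf': "continuous_map (top_of_set {0<..<1}) (subtopology G e) f'"
   and ff': "\<And>x. x \<in> e \<Longrightarrow> f' (f x) = x"
   and f'f: "\<And>y. y \<in> {0<..<1} \<Longrightarrow> f (f' y) = y"
    using hm tse unfolding homeomorphic_maps_def by auto
  have fe: "\<And>x. x \<in> e \<Longrightarrow> f x \<in> {0<..<1}" using cf tse by (auto simp: continuous_map_def)
  have f'e: "\<And>y. y \<in> {0<..<1} \<Longrightarrow> f' y \<in> e" using cf' tse by (auto simp: continuous_map_def)
  have hom': "homeomorphic_map (top_of_set {0<..<1::real}) (subtopology G e) f'"
    using hm unfolding homeomorphic_maps_map by blast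
  define h where "h = ds \<circ> f'"
  have "continuous_map (top_of_set {0<..<1}) euclideanreal h"
    unfolding h_def
    by (rule continuous_map_compose[OF continuous_map_into_fulltopology[OF cf'] ds_cont])
  then have hc: "continuous_on {0<..<1} h" by simp
  have lmin_r: "f' c = qmap R r" if c: "lminI h c" for c
  proof -
    obtain \<epsilon> where \<epsilon>: "\<epsilon> > 0" "\<And>x. x \<in> {0<..<1} \<Longrightarrow> \<bar>x - c\<bar> < \<epsilon> \<Longrightarrow> h c \<le> h x"
      and c01: "c \<in> {0<..<1}" using c unfolding lminI_def by auto
    define O' where "O' = {0<..<1} \<inter> ball c \<epsilon>"
    have Os: "O' \<subseteq> topspace (top_of_set {0<..<1::real})" unfolding O'_def by auto
    have oO: "openin (top_of_set {0<..<1::real}) O'"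
      unfolding O'_def by (auto simp: openin_open intro!: exI[of _ "ball c \<epsilon>"])
    have "openin (subtopology G e) (f' ` O') \<longleftrightarrow> openin (top_of_set {0<..<1::real}) O'"
      by (rule homeomorphic_map_openness[OF hom' Os])
    then have "openin (subtopology G e) (f' ` O')" using oO by simp
    then have oG: "openin G (f' ` O')" using openin_trans_full e by blast
    have cO: "c \<in> O'" unfolding O'_def using c01 \<epsilon> by auto
    show ?thesis
    proof (rule no_local_min[OF oG])
      show "f' c \<in> f' ` O'" using cO by auto
      fix u assume "u \<in> f' ` O'"
      then obtain x where x: "x \<in> O'" "u = f' x" by auto
      then have "h c \<le> h x" using \<epsilon>(2)[of x] unfolding O'_def by (auto simp: dist_real_def abs_minus_commute)
      then show "ds (f' c) \<le> ds u" using x h_def by simp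
    qed
  qed
  have mn: "c = c'" if "lminI h c" "lminI h c'" for c c'
  proof -
    have "c \<in> {0<..<1}" "c' \<in> {0<..<1}" using that unfolding lminI_def by auto
    then show ?thesis using lmin_r[OF that(1)] lmin_r[OF that(2)] f'f by metis
  qed
  have fin: "finite {a. lmaxI h a}" by (rule finite_lmax[OF hc mn])
  have "{p \<in> e. local_max_pt G ds p} \<subseteq> f' ` {a. lmaxI h a}"
  proof
    fix p assume p: "p \<in> {p \<in> e. local_max_pt G ds p}"
    then obtain U where U: "openin G U" "p \<in> U" "\<And>q. q \<in> U \<Longrightarrow> ds q \<le> ds p"
      unfolding local_max_pt_def by auto
    have pe: "p \<in> e" using p by auto
    define a where "a = f p"
    have a01: "a \<in> {0<..<1}" using fe pe a_def by auto
    have "openin (subtopology G e) (U \<inter> e)" using U(1) by (auto simp: openin_subtopology)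
    then have "openin (top_of_set {0<..<1}) {x \<in> topspace (top_of_set {0<..<1::real}). f' x \<in> U \<inter> e}"
      by (rule openin_continuous_map_preimage[OF cf'])
    then have "openin (top_of_set {0<..<1}) {x \<in> {0<..<1::real}. f' x \<in> U \<inter> e}" by simp
    then have op: "open {x \<in> {0<..<1::real}. f' x \<in> U \<inter> e}" by (rule openin_open_trans) simp
    have ain: "a \<in> {x \<in> {0<..<1::real}. f' x \<in> U \<inter> e}" using a01 a_def ff' pe U(2) by auto
    obtain \<epsilon> where \<epsilon>: "\<epsilon> > 0" "ball a \<epsilon> \<subseteq> {x \<in> {0<..<1::real}. f' x \<in> U \<inter> e}"
      using op ain open_contains_ball by blast
    have "lmaxI h a" unfolding lmaxI_def
    proof (intro conjI a01 exI[of _ \<epsilon>] \<epsilon>(1) ballI impI)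
      fix x assume "x \<in> {0<..<1::real}" "\<bar>x - a\<bar> < \<epsilon>"
      then have "x \<in> ball a \<epsilon>" by (auto simp: dist_real_def abs_minus_commute)
      then have "f' x \<in> U" using \<epsilon>(2) by auto
      then have "ds (f' x) \<le> ds p" by (rule U(3))
      then show "h x \<le> h a" using h_def a_def ff' pe by simp
    qed
    moreover have "p = f' a" using a_def ff' pe by simp
    ultimately show "p \<in> f' ` {a. lmaxI h a}" by auto
  qed
  then show ?thesis using fin finite_subset by blast
qed

lemma V_finite: "finite (reeb_vertices X R d r)"
proof -
  obtain W E where WE: "finite W" "W \<subseteq> topspace G" "finite E" "\<Union>E = topspace G - W"
    "\<And>e. e \<in> E \<Longrightarrow> openin G e \<and> subtopology G e homeomorphic_space top_of_set {0<..<(1::real)}"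
    using fin unfolding finite_topological_graph_def by metis
  have hmE: "\<exists>f f'. homeomorphic_maps (subtopology G e) (top_of_set {0<..<(1::real)}) f f'" if "e \<in> E" for e
    using WE(5)[OF that] unfolding homeomorphic_space_def by blast
  have fe: "finite {p \<in> e. local_max_pt G ds p}" if "e \<in> E" for e
    using hmE[OF that] edge_lmax_finite WE(5)[OF that] by blast
  have "reeb_vertices X R d r \<subseteq> W \<union> (\<Union>e\<in>E. {p \<in> e. local_max_pt G ds p}) \<union> {qmap R r}"
  proof
    fix p assume p: "p \<in> reeb_vertices X R d r"
    show "p \<in> W \<union> (\<Union>e\<in>E. {p \<in> e. local_max_pt G ds p}) \<union> {qmap R r}"
    proof (cases "p \<in> W \<or> p = qmap R r")
      case True then show ?thesis by auto
    next
      case False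
      then have pX: "p \<in> X // R" using p unfolding reeb_vertices_def by auto
      then obtain e where e: "e \<in> E" "p \<in> e" using WE(4) False quotient_top_topspace by blast
      obtain f f' where hm: "homeomorphic_maps (subtopology G e) (top_of_set {0<..<(1::real)}) f f'"
        using hmE[OF e(1)] by blast
      have "has_degree G p 2"
        by (rule deg2[OF _ homeomorphic_maps_imp_map[OF hm] e(2)]) (use WE(5)[OF e(1)] in blast)
      then have "local_max_pt G ds p" using p False unfolding reeb_vertices_def by auto
      then show ?thesis using e by auto
    qed
  qed
  moreover have "finite (W \<union> (\<Union>e\<in>E. {p \<in> e. local_max_pt G ds p}) \<union> {qmap R r})"
    using WE(1,3) fe by auto
  ultimately show ?thesis using finite_subset by blast
qed

end


context rg begin

abbreviation "Vx \<equiv> reeb_vertices X R d r"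
definition "adj a b \<longleftrightarrow> (\<exists>e\<in>reeb_edges X R d r. a \<in> G closure_of e \<and> b \<in> G closure_of e)"

lemma t1G: "t1_space G"
proof -
  have "Hausdorff_space G" using fin by (simp add: finite_topological_graph_def)
  then show ?thesis by (rule Hausdorff_imp_t1_space)
qed

lemma conn_adj:
  assumes C: "connectedin G C" "C \<inter> Vx = {}" and q: "q \<in> C" and p: "p \<in> G closure_of C"
  shows "adj q p"
proof -
  have CG: "C \<subseteq> topspace G" using C(1) connectedin_subset_topspace by blast
  let ?Y = "subtopology G (X // R - Vx)"
  have CY: "C \<subseteq> X // R - Vx" using CG C(2) by (auto simp: quotient_top_topspace)
  have cY: "connectedin ?Y C" using C(1) CY by (simp add: connectedin_subtopology)
  define e where "e = connected_component_of_set ?Y q"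
  have "q \<in> topspace G \<inter> (X // R - Vx)" using q CY CG by blast
  then have qY: "q \<in> topspace ?Y" by (simp only: topspace_subtopology)
  have eE: "e \<in> reeb_edges X R d r"
    unfolding reeb_edges_def e_def connected_components_of_def by (rule imageI[OF qY])
  have Ce: "C \<subseteq> e" unfolding e_def by (rule connected_component_of_maximal[OF cY q])
  have "C \<subseteq> G closure_of C" by (rule closure_of_subset[OF CG])
  then have "q \<in> G closure_of e" using closure_of_mono[OF Ce] q by blast
  moreover have "p \<in> G closure_of e" using closure_of_mono[OF Ce] p by blast
  ultimately show ?thesis unfolding adj_def using eE by blast
qed

lemma side_left:
  fixes s t :: real
  assumes g: "continuous_map (top_of_set {0..1}) G g"
    and st: "0 \<le> s" "s < t" "t \<le> 1"
    and N: "\<And>u. u \<in> {s..t} \<Longrightarrow> g u \<in> Vx \<Longrightarrow> g u = g t"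
    and ne: "g s \<noteq> g t"
  shows "adj (g s) (g t)"
proof -
  let ?p = "g t"
  define K where "K = {u \<in> {s..t}. g u = ?p}"
  have gst: "continuous_map (top_of_set {s..t}) G g"
  proof -
    have "{0..1} \<inter> {s..t} = {s..t::real}" using st by auto
    moreover have "continuous_map (subtopology (top_of_set {0..1}) {s..t}) G g"
      by (rule continuous_map_from_subtopology[OF g])
    ultimately show ?thesis by (simp only: subtopology_subtopology)
  qed
  have pG: "?p \<in> topspace G"
    using continuous_map_image_subset_topspace[OF g] st by auto
  have "closedin G {?p}" using t1G pG unfolding t1_space_closedin_singleton by blast
  then have "closedin (top_of_set {s..t}) {u \<in> topspace (top_of_set {s..t}). g u \<in> {?p}}"
    by (rule closedin_continuous_map_preimage[OF gst])
  then have "closedin (top_of_set {s..t}) K" unfolding K_def by simp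
  then have cK: "closed K" by (rule closedin_closed_trans) simp
  have tK: "t \<in> K" using st K_def by auto
  have bK: "bdd_below K" unfolding K_def by (auto intro: bdd_belowI[of _ s])
  define s' where "s' = Inf K"
  have s'K: "s' \<in> K" unfolding s'_def using closed_contains_Inf[OF _ bK cK] tK by auto
  have ss': "s < s'"
  proof -
    have "s \<le> s'" using s'K K_def by auto
    moreover have "s' \<noteq> s" using s'K K_def ne by auto
    ultimately show ?thesis by auto
  qed
  have s't: "s' \<le> t" using s'K K_def by auto
  define C where "C = g ` {s..<s'}"
  have sub01: "{s..<s'} \<subseteq> {0..1}" using st s't by auto
  have "connectedin (top_of_set {0..1}) {s..<s'}"
    using sub01 by (simp add: connectedin_subtopology)
  then have cC: "connectedin G C" unfolding C_def by (rule connectedin_continuous_map_image[OF g])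
  have CV: "C \<inter> Vx = {}"
  proof (rule ccontr)
    assume "C \<inter> Vx \<noteq> {}"
    then obtain v where v: "v \<in> C" "v \<in> Vx" by blast
    then obtain u where u0: "u \<in> {s..<s'}" "v = g u" unfolding C_def by blast
    then have u: "u \<in> {s..<s'}" "g u \<in> Vx" using v by auto
    then have "g u = ?p" using N s't by auto
    then have "u \<in> K" using u s't K_def by auto
    then have "s' \<le> u" unfolding s'_def using bK by (simp add: cInf_lower)
    then show False using u by auto
  qed
  have qC: "g s \<in> C" unfolding C_def using ss' by auto
  have "s' \<in> top_of_set {0..1} closure_of {s..<s'}"
    using ss' sub01 s't st by (auto simp: closure_of_subtopology Int_absorb1)
  then have "g s' \<in> G closure_of C"
    using continuous_map_image_closure_subset[OF g, of "{s..<s'}"] unfolding C_def by blast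
  moreover have "g s' = ?p" using s'K K_def by auto
  ultimately have "?p \<in> G closure_of C" by simp
  then show ?thesis by (rule conn_adj[OF cC CV qC])
qed

lemma side_right:
  fixes s t :: real
  assumes g: "continuous_map (top_of_set {0..1}) G g"
    and st: "0 \<le> t" "t < s" "s \<le> 1"
    and N: "\<And>u. u \<in> {t..s} \<Longrightarrow> g u \<in> Vx \<Longrightarrow> g u = g t"
    and ne: "g s \<noteq> g t"
  shows "adj (g s) (g t)"
proof -
  let ?p = "g t"
  define K where "K = {u \<in> {t..s}. g u = ?p}"
  have gst: "continuous_map (top_of_set {t..s}) G g"
  proof -
    have "{0..1} \<inter> {t..s} = {t..s::real}" using st by auto
    moreover have "continuous_map (subtopology (top_of_set {0..1}) {t..s}) G g"
      by (rule continuous_map_from_subtopology[OF g])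
    ultimately show ?thesis by (simp only: subtopology_subtopology)
  qed
  have pG: "?p \<in> topspace G"
    using continuous_map_image_subset_topspace[OF g] st by auto
  have "closedin G {?p}" using t1G pG unfolding t1_space_closedin_singleton by blast
  then have "closedin (top_of_set {t..s}) {u \<in> topspace (top_of_set {t..s}). g u \<in> {?p}}"
    by (rule closedin_continuous_map_preimage[OF gst])
  then have "closedin (top_of_set {t..s}) K" unfolding K_def by simp
  then have cK: "closed K" by (rule closedin_closed_trans) simp
  have tK: "t \<in> K" using st K_def by auto
  have bK: "bdd_above K" unfolding K_def by (auto intro: bdd_aboveI[of _ s])
  define s' where "s' = Sup K"
  have s'K: "s' \<in> K" unfolding s'_def using closed_contains_Sup[OF _ bK cK] tK by auto
  have ss': "s' < s"
  proof -
    have "s' \<le> s" using s'K K_def by auto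
    moreover have "s' \<noteq> s" using s'K K_def ne by auto
    ultimately show ?thesis by auto
  qed
  have s't: "t \<le> s'" using s'K K_def by auto
  define C where "C = g ` {s'<..s}"
  have sub01: "{s'<..s} \<subseteq> {0..1}" using st s't by auto
  have "connectedin (top_of_set {0..1}) {s'<..s}"
    using sub01 by (simp add: connectedin_subtopology)
  then have cC: "connectedin G C" unfolding C_def by (rule connectedin_continuous_map_image[OF g])
  have CV: "C \<inter> Vx = {}"
  proof (rule ccontr)
    assume "C \<inter> Vx \<noteq> {}"
    then obtain v where v: "v \<in> C" "v \<in> Vx" by blast
    then obtain u where u0: "u \<in> {s'<..s}" "v = g u" unfolding C_def by blast
    then have u: "u \<in> {s'<..s}" "g u \<in> Vx" using v by auto
    then have "g u = ?p" using N s't by auto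
    then have "u \<in> K" using u s't K_def by auto
    then have "u \<le> s'" unfolding s'_def using bK by (simp add: cSup_upper)
    then show False using u by auto
  qed
  have qC: "g s \<in> C" unfolding C_def using ss' by auto
  have "s' \<in> top_of_set {0..1} closure_of {s'<..s}"
    using ss' sub01 s't st by (auto simp: closure_of_subtopology Int_absorb1)
  then have "g s' \<in> G closure_of C"
    using continuous_map_image_closure_subset[OF g, of "{s'<..s}"] unfolding C_def by blast
  moreover have "g s' = ?p" using s'K K_def by auto
  ultimately have "?p \<in> G closure_of C" by simp
  then show ?thesis by (rule conn_adj[OF cC CV qC])
qed

lemma loc:
  fixes g :: "real \<Rightarrow> 'a set"
  assumes g: "continuous_map (top_of_set {0..1}) G g" and \<tau>: "\<tau> \<in> {0..1}"
  shows "\<exists>\<delta>>0. \<forall>s\<in>{0..1}. \<bar>s - \<tau>\<bar> < \<delta> \<longrightarrow> g s = g \<tau> \<or> adj (g s) (g \<tau>)"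
proof -
  let ?p = "g \<tau>"
  have VG: "Vx \<subseteq> topspace G" unfolding reeb_vertices_def quotient_top_topspace using qmap_in[OF rX] by auto
  have "closedin G (Vx - {?p})"
  proof -
    have "finite (Vx - {?p}) \<and> Vx - {?p} \<subseteq> topspace G" using V_finite VG by auto
    then show ?thesis using t1G unfolding t1_space_closedin_finite by blast
  qed
  then have oN: "openin G (topspace G - (Vx - {?p}))" by auto
  have "openin (top_of_set {0..1}) {u \<in> topspace (top_of_set {0..1}). g u \<in> topspace G - (Vx - {?p})}"
    by (rule openin_continuous_map_preimage[OF g oN])
  then have op: "openin (top_of_set {0..1}) {u \<in> {0..1::real}. g u \<in> topspace G - (Vx - {?p})}" by simp
  have pG: "?p \<in> topspace G"
    using continuous_map_image_subset_topspace[OF g] \<tau> by auto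
  define S where "S = {u \<in> {0..1::real}. g u \<in> topspace G - (Vx - {?p})}"
  have \<tau>S: "\<tau> \<in> S" using \<tau> pG S_def by auto
  have "\<forall>x\<in>S. \<exists>e>0. \<forall>x'\<in>{0..1}. dist x' x < e \<longrightarrow> x' \<in> S"
    using op unfolding openin_euclidean_subtopology_iff S_def[symmetric] by (elim conjE)
  then obtain \<delta> where \<delta>: "\<delta> > 0" "\<And>u. u \<in> {0..1} \<Longrightarrow> dist u \<tau> < \<delta> \<Longrightarrow> u \<in> S"
    using \<tau>S by blast
  have Nn: "g u = ?p" if "u \<in> {0..1}" "\<bar>u - \<tau>\<bar> < \<delta>" "g u \<in> Vx" for u
    using \<delta>(2)[of u] that by (auto simp: dist_real_def S_def)
  show ?thesis
  proof (intro exI[of _ \<delta>] conjI \<delta>(1) ballI impI)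
    fix s :: real assume s: "s \<in> {0..1}" "\<bar>s - \<tau>\<bar> < \<delta>"
    show "g s = ?p \<or> adj (g s) ?p"
    proof (cases "g s = ?p")
      case False
      show ?thesis
      proof (cases "s < \<tau>")
        case True
        have N1: "g u = g \<tau>" if "u \<in> {s..\<tau>}" "g u \<in> Vx" for u
        proof (rule Nn[OF _ _ that(2)])
          show "u \<in> {0..1}" using that(1) s \<tau> by auto
          show "\<bar>u - \<tau>\<bar> < \<delta>" using that(1) s True by auto
        qed
        have "adj (g s) ?p"
          by (rule side_left[OF g _ True _ N1 False]) (use s \<tau> in auto)
        then show ?thesis by simp
      next
        case F2: False
        have "\<tau> < s" using False F2 by (cases "s = \<tau>") auto
        have N1: "g u = g \<tau>" if "u \<in> {\<tau>..s}" "g u \<in> Vx" for u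
        proof (rule Nn[OF _ _ that(2)])
          show "u \<in> {0..1}" using that(1) s \<tau> by auto
          show "\<bar>u - \<tau>\<bar> < \<delta>" using that(1) s \<open>\<tau> < s\<close> by auto
        qed
        have "adj (g s) ?p"
          by (rule side_right[OF g _ \<open>\<tau> < s\<close> _ N1 False]) (use s \<tau> in auto)
        then show ?thesis by simp
      qed
    next
      case True then show ?thesis by (rule disjI1)
    qed
  qed
qed

end


context rg begin

lemma adj_sym: "adj a b \<Longrightarrow> adj b a" unfolding adj_def by blast

lemma main:
  assumes x: "x \<in> X" and y: "y \<in> X"
  shows "reeb_graph_dist X R d r (qmap R x) (qmap R y) \<le> dist x y"
proof -
  define D where "D = dist x y"
  have D0: "D \<ge> 0" unfolding D_def by simp
  obtain \<gamma> :: "real \<Rightarrow> 'a" where gm: "\<gamma> 0 = x" "\<gamma> 1 = y" "\<gamma> ` {0..1} \<subseteq> X"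
    and gl: "\<And>s t. s \<in> {0..1} \<Longrightarrow> t \<in> {0..1} \<Longrightarrow> dist (\<gamma> s) (\<gamma> t) = \<bar>s - t\<bar> * D"
    using geo x y unfolding geodesic_space_def D_def by metis
  have cont: "continuous_on {0..1} \<gamma>"
    unfolding continuous_on_iff
  proof (intro ballI allI impI)
    fix a e :: real assume a: "a \<in> {0..1}" and e: "0 < e"
    show "\<exists>\<delta>>0. \<forall>x'\<in>{0..1}. dist x' a < \<delta> \<longrightarrow> dist (\<gamma> x') (\<gamma> a) < e"
    proof (intro exI[of _ "e / (D + 1)"] conjI ballI impI)
      show "0 < e / (D + 1)" using e D0 by simp
      fix x' :: real assume x': "x' \<in> {0..1}" "dist x' a < e / (D + 1)"
      have "dist (\<gamma> x') (\<gamma> a) = \<bar>x' - a\<bar> * D" using gl[OF x'(1) a] .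
      also have "\<dots> \<le> \<bar>x' - a\<bar> * (D + 1)" using D0 by (simp add: mult_left_mono)
      also have "\<dots> < e" using x'(2) D0 by (simp add: dist_real_def field_simps)
      finally show "dist (\<gamma> x') (\<gamma> a) < e" .
    qed
  qed
  have c\<gamma>: "continuous_map (top_of_set {0..1}) (top_of_set X) \<gamma>"
    using cont gm(3) by (simp add: continuous_map_in_subtopology image_subset_iff_funcset)
  define g where "g = qmap R \<circ> \<gamma>"
  have cg: "continuous_map (top_of_set {0..1}) G g"
    unfolding g_def by (rule continuous_map_compose[OF c\<gamma> continuous_qmap])
  have dsg: "ds (g s) = d (\<gamma> s)" if "s \<in> {0..1}" for s
  proof -
    have "\<gamma> s \<in> X" using gm(3) that by blast
    then show ?thesis using ds_qmap unfolding g_def by simp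
  qed
  have costb: "\<bar>ds (g s) - ds (g t)\<bar> \<le> \<bar>s - t\<bar> * D" if "s \<in> {0..1}" "t \<in> {0..1}" for s t
  proof -
    have "\<bar>ds (g s) - ds (g t)\<bar> = \<bar>dist (\<gamma> s) r - dist r (\<gamma> t)\<bar>"
      using dsg that by (simp add: dd dist_commute)
    also have "\<dots> \<le> dist (\<gamma> s) (\<gamma> t)" by (rule abs_dist_diff_le)
    also have "\<dots> = \<bar>s - t\<bar> * D" using gl that by simp
    finally show ?thesis .
  qed
  define P where "P t \<longleftrightarrow> (\<exists>c n. c 0 = g 0 \<and> c n = g t \<and> (\<forall>i<n. adj (c i) (c (Suc i))) \<and>
      (\<Sum>i<n. \<bar>ds (c i) - ds (c (Suc i))\<bar>) \<le> t * D)" for t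
  have ext: "P t" if Ps: "P s" and st: "0 \<le> s" "s \<le> t" "t \<le> 1"
    and a: "g t = g s \<or> adj (g s) (g t)" for s t
  proof -
    obtain c n where c: "c 0 = g 0" "c n = g s" "\<forall>i<n. adj (c i) (c (Suc i))"
      "(\<Sum>i<n. \<bar>ds (c i) - ds (c (Suc i))\<bar>) \<le> s * D"
      using Ps unfolding P_def by blast
    show ?thesis
    proof (cases "g t = g s")
      case True
      have "s * D \<le> t * D" using st D0 by (simp add: mult_right_mono)
      then show ?thesis unfolding P_def using c True by (intro exI[of _ c] exI[of _ n]) auto
    next
      case False
      then have ad: "adj (g s) (g t)" using a by auto
      define c' where "c' = (\<lambda>i. if i \<le> n then c i else g t)"
      have c'0: "c' 0 = g 0" using c unfolding c'_def by simp
      have c'n: "c' (Suc n) = g t" unfolding c'_def by simp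
      have c'adj: "\<forall>i<Suc n. adj (c' i) (c' (Suc i))"
      proof (intro allI impI)
        fix i assume i: "i < Suc n"
        show "adj (c' i) (c' (Suc i))"
        proof (cases "i < n")
          case True then show ?thesis using c(3) unfolding c'_def by simp
        next
          case False then have "i = n" using i by simp
          then show ?thesis using ad c(2) unfolding c'_def by simp
        qed
      qed
      have "(\<Sum>i<Suc n. \<bar>ds (c' i) - ds (c' (Suc i))\<bar>)
          = (\<Sum>i<n. \<bar>ds (c' i) - ds (c' (Suc i))\<bar>) + \<bar>ds (c' n) - ds (c' (Suc n))\<bar>" by simp
      also have "(\<Sum>i<n. \<bar>ds (c' i) - ds (c' (Suc i))\<bar>) = (\<Sum>i<n. \<bar>ds (c i) - ds (c (Suc i))\<bar>)"
        by (rule sum.cong) (auto simp: c'_def)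
      also have "\<bar>ds (c' n) - ds (c' (Suc n))\<bar> = \<bar>ds (g s) - ds (g t)\<bar>" using c(2) unfolding c'_def by simp
      also have "\<dots> \<le> \<bar>s - t\<bar> * D" by (rule costb) (use st in auto)
      finally have "(\<Sum>i<Suc n. \<bar>ds (c' i) - ds (c' (Suc i))\<bar>) \<le> s * D + \<bar>s - t\<bar> * D" using c(4) by linarith
      also have "\<dots> = t * D" using st by (simp add: algebra_simps)
      finally show ?thesis unfolding P_def using c'0 c'n c'adj by blast
    qed
  qed
  define A where "A = {t \<in> {0..1}. P t}"
  have P0: "P 0" unfolding P_def by (intro exI[of _ "\<lambda>_. g 0"] exI[of _ 0]) simp
  have A0: "0 \<in> A" using P0 A_def by simp
  have Ane: "A \<noteq> {}" using A0 by auto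
  have Abd: "bdd_above A" unfolding A_def by (auto intro: bdd_aboveI[of _ 1])
  define T where "T = Sup A"
  have T0: "0 \<le> T" unfolding T_def using cSup_upper[OF A0 Abd] .
  have T1: "T \<le> 1" unfolding T_def by (rule cSup_least[OF Ane]) (auto simp: A_def)
  obtain \<delta> where \<delta>: "\<delta> > 0" "\<And>s. s \<in> {0..1} \<Longrightarrow> \<bar>s - T\<bar> < \<delta> \<Longrightarrow> g s = g T \<or> adj (g s) (g T)"
    using loc[OF cg, of T] T0 T1 by auto
  obtain s where s: "s \<in> A" "T - \<delta> < s"
    using less_cSupD[OF Ane, of "T - \<delta>"] \<delta>(1) T_def by auto
  have sT: "s \<le> T" unfolding T_def by (rule cSup_upper[OF s(1) Abd])
  have s01: "s \<in> {0..1}" "P s" using s A_def by auto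
  have PT: "P T"
  proof (rule ext[OF s01(2)])
    show "0 \<le> s" "s \<le> T" "T \<le> 1" using s01 sT T1 by auto
    have "g s = g T \<or> adj (g s) (g T)" using \<delta>(2)[OF s01(1)] sT s(2) by auto
    then show "g T = g s \<or> adj (g s) (g T)" by auto
  qed
  have T_1: "T = 1"
  proof (rule ccontr)
    assume "T \<noteq> 1"
    then have Tl: "T < 1" using T1 by simp
    define t where "t = min 1 (T + \<delta> / 2)"
    have t: "T < t" "t \<le> 1" "\<bar>t - T\<bar> < \<delta>" using Tl \<delta>(1) unfolding t_def by auto
    have t01: "t \<in> {0..1}" using t T0 by auto
    have "g t = g T \<or> adj (g t) (g T)" using \<delta>(2)[OF t01 t(3)] .
    then have "g t = g T \<or> adj (g T) (g t)" using adj_sym by blast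
    then have "P t" using ext[OF PT T0 _ t(2)] t(1) by auto
    then have "t \<in> A" using t01 A_def by auto
    then have "t \<le> T" unfolding T_def by (rule cSup_upper[OF _ Abd])
    then show False using t(1) by simp
  qed
  then have "P 1" using PT by simp
  then obtain c n where c: "c 0 = g 0" "c n = g 1" "\<forall>i<n. adj (c i) (c (Suc i))"
      "(\<Sum>i<n. \<bar>ds (c i) - ds (c (Suc i))\<bar>) \<le> D"
    unfolding P_def by auto
  define SS where "SS = {(\<Sum>i<n. \<bar>dstar X R d (c i) - dstar X R d (c (Suc i))\<bar>) | c n.
            c 0 = qmap R x \<and> c n = qmap R y \<and>
            (\<forall>i<n. \<exists>e\<in>reeb_edges X R d r.
                c i \<in> (quotient_top X R) closure_of e \<and>
                c (Suc i) \<in> (quotient_top X R) closure_of e)}"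
  have g0: "g 0 = qmap R x" and g1: "g 1 = qmap R y" using gm unfolding g_def by auto
  have mem: "(\<Sum>i<n. \<bar>ds (c i) - ds (c (Suc i))\<bar>) \<in> SS"
    unfolding SS_def using c g0 g1 unfolding adj_def by blast
  have bb: "bdd_below SS" unfolding SS_def by (rule bdd_belowI[of _ 0]) (auto intro: sum_nonneg)
  have "reeb_graph_dist X R d r (qmap R x) (qmap R y) = Inf SS"
    unfolding reeb_graph_dist_def SS_def by simp
  also have "\<dots> \<le> (\<Sum>i<n. \<bar>ds (c i) - ds (c (Suc i))\<bar>)" by (rule cInf_lower[OF mem bb])
  also have "\<dots> \<le> dist x y" using c(4) D_def by simp
  finally show ?thesis .
qed

end


theorem lemma5:
  fixes X :: "'a::metric_space set" and r :: 'a and d :: "'a \<Rightarrow> real"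
    and R :: "('a \<times> 'a) set" and \<alpha> :: real and \<I> :: "real set set"
  assumes "compact X" and "geodesic_space X" and "r \<in> X"
    and "d = (\<lambda>x. dist r x)"
    and "R = reeb_rel X d \<or> (\<alpha> > 0 \<and> alpha_cover \<alpha> X d \<I> \<and> R = alpha_reeb_rel X d \<I>)"
    and "finite_topological_graph (quotient_top X R)"
    and "x \<in> X" and "y \<in> X"
  shows "reeb_graph_dist X R d r (qmap R x) (qmap R y) \<le> dist x y"
proof -
  have props: "(\<forall>x. x \<in> X \<longrightarrow> (x, x) \<in> R) \<and> (\<forall>a b. (a, b) \<in> R \<longrightarrow> d a = d b)"
    using assms(5)
  proof
    assume R: "R = reeb_rel X d"
    show ?thesis unfolding R reeb_rel_def by (auto intro: path_component_refl)
  next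
    assume H: "\<alpha> > 0 \<and> alpha_cover \<alpha> X d \<I> \<and> R = alpha_reeb_rel X d \<I>"
    define R0 where "R0 = {(x, y). x \<in> X \<and> y \<in> X \<and> d x = d y \<and>
        (\<exists>I\<in>\<I>. path_component {z \<in> X. d z \<in> I} x y)}"
    have RR: "R = R0\<^sup>+" using H unfolding alpha_reeb_rel_def R0_def by simp
    have rf: "(x, x) \<in> R" if x: "x \<in> X" for x
    proof -
      have "d x \<in> \<Union>\<I>" using H x unfolding alpha_cover_def by auto
      then obtain I where I: "I \<in> \<I>" "d x \<in> I" by auto
      have "path_component {z \<in> X. d z \<in> I} x x" by (rule path_component_refl) (use I x in auto)
      then have "(x, x) \<in> R0" unfolding R0_def using x I by auto
      then show ?thesis unfolding RR by (rule r_into_trancl)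
    qed
    have dd: "d a = d b" if "(a, b) \<in> R" for a b
    proof -
      have "(a, b) \<in> R0\<^sup>+" using that RR by simp
      then show ?thesis
        by (induction rule: trancl_induct) (auto simp: R0_def)
    qed
    show ?thesis using rf dd by blast
  qed
  interpret rg X R d r
    by unfold_locales (use props assms(2,3,4,6) in auto)
  show ?thesis by (rule main[OF assms(7,8)])
qed


end
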